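(* Let $G,H$ be graphs with $H$ connected and let $b$ be a positive integer. Consider the $(H,b)$ deletion algorithm: starting from $G_0=G$, as long as possible obtain $G_{i+1}$ from $G_i$ by deleting, arbitrarily, either a bad vertex, a bad edge, a bad set, or (the vertex set of) a small component, all defined with respect to the current graph $G_i$ and the fixed $H,b$. Then, regardless of the arbitrary choices made, the algorithm terminates with the $(H,b)$-core of $G$. In particular the $(H,b)$-core of $G$ is $(H,b)$-stable.
   Context: With respect to a graph $F$, a connected graph $H$ and a positive integer $b$: a bad vertex is a vertex of $F$ lying in no copy of $H$ in $F$; a bad edge is an edge of $F$ lying in no copy of $H$ in $F$; a bad set is a set $U\subseteq V(F)$ with $2\le|U|\le b+1$ such that no copy $\hat H$ of $H$ in $F$ satisfies $|V(\hat H)\cap U|=1$; a small component is a connected component of $F$ with at most $(b+1)(v(H)-1)$ vertices. A graph is $(H,b)$-stable if none of these four exist in it. The $(H,b)$-core of $G$ is the union of all $(H,b)$-stable subgraphs of $G$. *)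

theory Defs
  imports Main
begin

text \<open>Finite simple graphs: a vertex set and a set of 2-element edges.\<close>
type_synonym 'a graph = "'a set \<times> 'a set set"

definition verts :: "'a graph \<Rightarrow> 'a set" where "verts F = fst F"
definition edges :: "'a graph \<Rightarrow> 'a set set" where "edges F = snd F"

definition wf_graph :: "'a graph \<Rightarrow> bool" where
  "wf_graph F \<longleftrightarrow> finite (verts F) \<and>
     (\<forall>e \<in> edges F. e \<subseteq> verts F \<and> card e = 2)"

definition adj :: "'a graph \<Rightarrow> 'a \<Rightarrow> 'a \<Rightarrow> bool" where
  "adj F u v \<longleftrightarrow> {u, v} \<in> edges F"

definition reach :: "'a graph \<Rightarrow> 'a \<Rightarrow> 'a \<Rightarrow> bool" where
  "reach F u v \<longleftrightarrow> u \<in> verts F \<and> (adj F)\<^sup>*\<^sup>* u v"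

definition connected_graph :: "'a graph \<Rightarrow> bool" where
  "connected_graph F \<longleftrightarrow> verts F \<noteq> {} \<and> (\<forall>u \<in> verts F. \<forall>v \<in> verts F. reach F u v)"

definition component :: "'a graph \<Rightarrow> 'a set \<Rightarrow> bool" where
  "component F C \<longleftrightarrow> (\<exists>v \<in> verts F. C = {w. reach F v w})"

text \<open>A copy of H in F, given by an injective homomorphism f; the copy is the
  subgraph with vertices f ` V(H) and edges (image f) ` E(H).\<close>
definition embedding :: "'b graph \<Rightarrow> 'a graph \<Rightarrow> ('b \<Rightarrow> 'a) \<Rightarrow> bool" where
  "embedding H F f \<longleftrightarrow> inj_on f (verts H) \<and> f ` verts H \<subseteq> verts F \<and>
     (\<forall>e \<in> edges H. f ` e \<in> edges F)"

definition bad_vertex :: "'b graph \<Rightarrow> 'a graph \<Rightarrow> 'a \<Rightarrow> bool" where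
  "bad_vertex H F v \<longleftrightarrow> v \<in> verts F \<and>
     \<not> (\<exists>f. embedding H F f \<and> v \<in> f ` verts H)"

definition bad_edge :: "'b graph \<Rightarrow> 'a graph \<Rightarrow> 'a set \<Rightarrow> bool" where
  "bad_edge H F e \<longleftrightarrow> e \<in> edges F \<and>
     \<not> (\<exists>f. embedding H F f \<and> e \<in> (\<lambda>x. f ` x) ` edges H)"

definition bad_set :: "'b graph \<Rightarrow> nat \<Rightarrow> 'a graph \<Rightarrow> 'a set \<Rightarrow> bool" where
  "bad_set H b F U \<longleftrightarrow> U \<subseteq> verts F \<and> 2 \<le> card U \<and> card U \<le> b + 1 \<and>
     \<not> (\<exists>f. embedding H F f \<and> card (f ` verts H \<inter> U) = 1)"

definition small_component :: "'b graph \<Rightarrow> nat \<Rightarrow> 'a graph \<Rightarrow> 'a set \<Rightarrow> bool" where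
  "small_component H b F C \<longleftrightarrow> component F C \<and>
     card C \<le> (b + 1) * (card (verts H) - 1)"

definition stable :: "'b graph \<Rightarrow> nat \<Rightarrow> 'a graph \<Rightarrow> bool" where
  "stable H b F \<longleftrightarrow> (\<nexists>v. bad_vertex H F v) \<and> (\<nexists>e. bad_edge H F e) \<and>
     (\<nexists>U. bad_set H b F U) \<and> (\<nexists>C. small_component H b F C)"

definition subgraph :: "'a graph \<Rightarrow> 'a graph \<Rightarrow> bool" where
  "subgraph F G \<longleftrightarrow> wf_graph F \<and> verts F \<subseteq> verts G \<and> edges F \<subseteq> edges G"

definition core :: "'b graph \<Rightarrow> nat \<Rightarrow> 'a graph \<Rightarrow> 'a graph" where
  "core H b G = (\<Union>{verts F | F. subgraph F G \<and> stable H b F},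
                 \<Union>{edges F | F. subgraph F G \<and> stable H b F})"

definition delete_verts :: "'a graph \<Rightarrow> 'a set \<Rightarrow> 'a graph" where
  "delete_verts F U = (verts F - U, {e \<in> edges F. e \<inter> U = {}})"

definition delete_edge :: "'a graph \<Rightarrow> 'a set \<Rightarrow> 'a graph" where
  "delete_edge F e = (verts F, edges F - {e})"

definition del_step :: "'b graph \<Rightarrow> nat \<Rightarrow> 'a graph \<Rightarrow> 'a graph \<Rightarrow> bool" where
  "del_step H b F F' \<longleftrightarrow>
     (\<exists>v. bad_vertex H F v \<and> F' = delete_verts F {v}) \<or>
     (\<exists>e. bad_edge H F e \<and> F' = delete_edge F e) \<or>
     (\<exists>U. bad_set H b F U \<and> F' = delete_verts F U) \<or>
     (\<exists>C. small_component H b F C \<and> F' = delete_verts F C)"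

end

theory Submission
  imports Defs
begin

definition mu :: "'a graph \<Rightarrow> nat" where "mu F = card (verts F) + card (edges F)"

lemma verts_dv[simp]: "verts (delete_verts F U) = verts F - U"
  and edges_dv[simp]: "edges (delete_verts F U) = {e \<in> edges F. e \<inter> U = {}}"
  and verts_de[simp]: "verts (delete_edge F e) = verts F"
  and edges_de[simp]: "edges (delete_edge F e) = edges F - {e}"
  by (auto simp: delete_verts_def delete_edge_def verts_def edges_def)

lemma wf_fin_edges: "wf_graph F \<Longrightarrow> finite (edges F)"
proof -
  assume w: "wf_graph F"
  then have "edges F \<subseteq> Pow (verts F)" unfolding wf_graph_def by blast
  moreover have "finite (Pow (verts F))" using w unfolding wf_graph_def by simp
  ultimately show ?thesis by (rule finite_subset)
qed

lemma dv_wf: "wf_graph F \<Longrightarrow> U \<inter> verts F \<noteq> {} \<Longrightarrow>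
   wf_graph (delete_verts F U) \<and> mu (delete_verts F U) < mu F"
proof -
  assume w: "wf_graph F" and ne: "U \<inter> verts F \<noteq> {}"
  have fv: "finite (verts F)" using w wf_graph_def by blast
  have fe: "finite (edges F)" using wf_fin_edges[OF w] .
  have "wf_graph (delete_verts F U)" using w unfolding wf_graph_def by auto
  moreover have "card (verts F - U) < card (verts F)"
    using fv ne by (intro psubset_card_mono) auto
  moreover have "card {e \<in> edges F. e \<inter> U = {}} \<le> card (edges F)"
    using fe by (intro card_mono) auto
  ultimately show ?thesis by (simp add: mu_def)
qed

lemma reach_verts0: "(adj F)\<^sup>*\<^sup>* v w \<Longrightarrow> wf_graph F \<Longrightarrow> v \<in> verts F \<Longrightarrow> w \<in> verts F"
proof (induction rule: rtranclp_induct)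
  case (step y z)
  then have "{y, z} \<in> edges F" by (simp add: adj_def)
  moreover have "\<forall>e \<in> edges F. e \<subseteq> verts F" using step.prems(1) unfolding wf_graph_def by simp
  ultimately show ?case by auto
qed simp

lemma reach_verts: "wf_graph F \<Longrightarrow> (adj F)\<^sup>*\<^sup>* v w \<Longrightarrow> v \<in> verts F \<Longrightarrow> w \<in> verts F"
proof -
  assume "wf_graph F" "(adj F)\<^sup>*\<^sup>* v w" "v \<in> verts F"
  then show ?thesis using reach_verts0[of F v w] by simp
qed

lemma step_wf: "wf_graph F \<Longrightarrow> del_step H b F F' \<Longrightarrow> wf_graph F' \<and> mu F' < mu F"
proof -
  assume w: "wf_graph F" and s: "del_step H b F F'"
  from s show ?thesis unfolding del_step_def
  proof (elim disjE exE conjE)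
    fix v assume "bad_vertex H F v" "F' = delete_verts F {v}"
    then show ?thesis using dv_wf[OF w, of "{v}"] by (auto simp: bad_vertex_def)
  next
    fix e assume a: "bad_edge H F e" "F' = delete_edge F e"
    have fe: "finite (edges F)" using wf_fin_edges[OF w] .
    have "e \<in> edges F" using a by (simp add: bad_edge_def)
    then have "card (edges F - {e}) < card (edges F)" using fe
      by (intro card_Diff1_less)
    moreover have "wf_graph F'" using w a unfolding wf_graph_def by auto
    ultimately show ?thesis using a by (simp add: mu_def)
  next
    fix U assume a: "bad_set H b F U" "F' = delete_verts F U"
    then have "U \<subseteq> verts F" "2 \<le> card U" by (auto simp: bad_set_def)
    then have "U \<inter> verts F \<noteq> {}" by (metis card.empty inf.absorb_iff1 not_numeral_le_zero)
    then show ?thesis using dv_wf[OF w] a by simp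
  next
    fix C assume a: "small_component H b F C" "F' = delete_verts F C"
    then obtain v where "v \<in> verts F" "C = {w. reach F v w}"
      by (auto simp: small_component_def component_def)
    then have "v \<in> C \<inter> verts F" by (simp add: reach_def)
    then show ?thesis using dv_wf[OF w, of C] a by auto
  qed
qed

lemma step_sub: "del_step H b F F' \<Longrightarrow> verts F' \<subseteq> verts F \<and> edges F' \<subseteq> edges F"
  unfolding del_step_def by auto

lemma emb_mono: "embedding H S f \<Longrightarrow> verts S \<subseteq> verts F \<Longrightarrow> edges S \<subseteq> edges F \<Longrightarrow> embedding H F f"
  unfolding embedding_def by blast

lemma keep_dv:
  assumes "subgraph S F" "U \<inter> verts S = {}"
  shows "subgraph S (delete_verts F U)"
  using assms unfolding subgraph_def wf_graph_def by auto

lemma keep: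
  assumes w: "wf_graph F" and sg: "subgraph S F" and st: "stable H b S"
    and s: "del_step H b F F'"
  shows "subgraph S F'"
proof -
  have wS: "wf_graph S" and vs: "verts S \<subseteq> verts F" and es: "edges S \<subseteq> edges F"
    using sg by (auto simp: subgraph_def)
  from s show ?thesis unfolding del_step_def
  proof (elim disjE exE conjE)
    fix v assume a: "bad_vertex H F v" "F' = delete_verts F {v}"
    have "v \<notin> verts S"
    proof
      assume "v \<in> verts S"
      then obtain f where "embedding H S f" "v \<in> f ` verts H"
        using st unfolding stable_def bad_vertex_def by blast
      then show False using a emb_mono[OF _ vs es] unfolding bad_vertex_def by blast
    qed
    then show ?thesis using keep_dv[OF sg, of "{v}"] a by auto
  next
    fix e assume a: "bad_edge H F e" "F' = delete_edge F e"
    have "e \<notin> edges S"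
    proof
      assume "e \<in> edges S"
      then obtain f where "embedding H S f" "e \<in> (\<lambda>x. f ` x) ` edges H"
        using st unfolding stable_def bad_edge_def by blast
      then show False using a emb_mono[OF _ vs es] unfolding bad_edge_def by blast
    qed
    then show ?thesis using sg a unfolding subgraph_def by auto
  next
    fix U assume a: "bad_set H b F U" "F' = delete_verts F U"
    have Ufin: "finite U" using a by (auto simp: bad_set_def intro: card_ge_0_finite)
    have "U \<inter> verts S = {}"
    proof (rule ccontr)
      assume ne: "U \<inter> verts S \<noteq> {}"
      have fin: "finite (U \<inter> verts S)" using Ufin by simp
      show False
      proof (cases "card (U \<inter> verts S) = 1")
        case True
        then obtain u where u: "U \<inter> verts S = {u}" by (meson card_1_singletonE)
        then have "u \<in> verts S" by auto
        then obtain f where f: "embedding H S f" "u \<in> f ` verts H"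
          using st unfolding stable_def bad_vertex_def by blast
        have "f ` verts H \<subseteq> verts S" using f unfolding embedding_def by blast
        then have "f ` verts H \<inter> U = {u}" using u f(2) by blast
        then have "card (f ` verts H \<inter> U) = 1" by simp
        moreover have "embedding H F f" using emb_mono[OF f(1) vs es] .
        ultimately show False using a(1) unfolding bad_set_def by blast
      next
        case False
        have "card (U \<inter> verts S) \<noteq> 0" using fin ne by simp
        then have c2: "2 \<le> card (U \<inter> verts S)" using False by linarith
        have "card (U \<inter> verts S) \<le> card U" using Ufin by (simp add: card_mono)
        then have "card (U \<inter> verts S) \<le> b + 1" using a by (simp add: bad_set_def)
        then obtain f where f: "embedding H S f" "card (f ` verts H \<inter> (U \<inter> verts S)) = 1"
          using st c2 unfolding stable_def bad_set_def by blast
        have "f ` verts H \<subseteq> verts S" using f unfolding embedding_def by blast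
        then have "f ` verts H \<inter> (U \<inter> verts S) = f ` verts H \<inter> U" by blast
        then have "card (f ` verts H \<inter> U) = 1" using f(2) by simp
        moreover have "embedding H F f" using emb_mono[OF f(1) vs es] .
        ultimately show False using a(1) unfolding bad_set_def by blast
      qed
    qed
    then show ?thesis using keep_dv[OF sg] a by simp
  next
    fix C assume a: "small_component H b F C" "F' = delete_verts F C"
    then obtain v0 where v0: "v0 \<in> verts F" "C = {w. reach F v0 w}"
      and cb: "card C \<le> (b + 1) * (card (verts H) - 1)"
      by (auto simp: small_component_def component_def)
    have CV: "C \<subseteq> verts F" using v0 reach_verts[OF w] by (auto simp: reach_def)
    have Cfin: "finite C" using CV w finite_subset unfolding wf_graph_def by blast
    have "C \<inter> verts S = {}"
    proof (rule ccontr)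
      assume "C \<inter> verts S \<noteq> {}"
      then obtain v where v: "v \<in> C" "v \<in> verts S" by blast
      have am: "\<And>x y. adj S x y \<Longrightarrow> adj F x y" using es by (auto simp: adj_def)
      have sub: "{w. reach S v w} \<subseteq> C"
      proof
        fix x assume "x \<in> {w. reach S v w}"
        then have "(adj S)\<^sup>*\<^sup>* v x" by (simp add: reach_def)
        then have "(adj F)\<^sup>*\<^sup>* v x" by (rule rtranclp_mono[THEN predicate2D, rotated]) (auto intro: am)
        moreover have "(adj F)\<^sup>*\<^sup>* v0 v" using v v0 by (simp add: reach_def)
        ultimately show "x \<in> C" using v0 by (simp add: reach_def)
      qed
      have "component S {w. reach S v w}" using v by (auto simp: component_def)
      then have "\<not> card {w. reach S v w} \<le> (b + 1) * (card (verts H) - 1)"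
        using st unfolding stable_def small_component_def by blast
      moreover have "card {w. reach S v w} \<le> card C" using sub Cfin by (simp add: card_mono)
      ultimately show False using cb by linarith
    qed
    then show ?thesis using keep_dv[OF sg] a by simp
  qed
qed

lemma chain: "s 0 = G \<Longrightarrow> \<forall>i. del_step H b (s i) (s (Suc i)) \<Longrightarrow> wf_graph G \<Longrightarrow>
   wf_graph (s i) \<and> mu (s i) + i \<le> mu G"
proof (induction i)
  case 0 then show ?case by simp
next
  case (Suc i)
  then have "wf_graph (s i)" "mu (s i) + i \<le> mu G" by auto
  moreover have "del_step H b (s i) (s (Suc i))" using Suc by blast
  ultimately show ?case using step_wf by fastforce
qed

lemma exists_term: "wf_graph F \<Longrightarrow> \<exists>F'. (del_step H b)\<^sup>*\<^sup>* F F' \<and> (\<nexists>F''. del_step H b F' F'')"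
proof (induction "mu F" arbitrary: F rule: less_induct)
  case less
  show ?case
  proof (cases "\<exists>F''. del_step H b F F''")
    case True
    then obtain F'' where s: "del_step H b F F''" by blast
    then have "wf_graph F''" "mu F'' < mu F" using step_wf[of F H b F''] less.prems by auto
    then obtain F' where "(del_step H b)\<^sup>*\<^sup>* F'' F'" "\<nexists>F''. del_step H b F' F''"
      using less by blast
    then show ?thesis using s by (meson converse_rtranclp_into_rtranclp)
  next
    case False then show ?thesis by blast
  qed
qed

lemma reach_props:
  assumes "(del_step H b)\<^sup>*\<^sup>* G F" "wf_graph G"
  shows "wf_graph F \<and> verts F \<subseteq> verts G \<and> edges F \<subseteq> edges G \<and>
     (\<forall>S. subgraph S G \<and> stable H b S \<longrightarrow> subgraph S F)"
  using assms
proof (induction rule: rtranclp_induct)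
  case base then show ?case by simp
next
  case (step y z)
  then have w: "wf_graph y" and vy: "verts y \<subseteq> verts G" and ey: "edges y \<subseteq> edges G"
    and ss: "\<forall>S. subgraph S G \<and> stable H b S \<longrightarrow> subgraph S y" by auto
  have "wf_graph z" using step_wf[OF w step(2)] by simp
  moreover have "verts z \<subseteq> verts G \<and> edges z \<subseteq> edges G"
    using step_sub[OF step(2)] vy ey by blast
  moreover have "\<forall>S. subgraph S G \<and> stable H b S \<longrightarrow> subgraph S z"
  proof (intro allI impI)
    fix S assume "subgraph S G \<and> stable H b S"
    then show "subgraph S z" using keep[OF w _ _ step(2)] ss by blast
  qed
  ultimately show ?case by blast
qed

lemma terminal_core:
  assumes "(del_step H b)\<^sup>*\<^sup>* G F" "wf_graph G" "\<nexists>F'. del_step H b F F'"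
  shows "F = core H b G \<and> stable H b F"
proof -
  have P: "wf_graph F \<and> verts F \<subseteq> verts G \<and> edges F \<subseteq> edges G \<and>
     (\<forall>S. subgraph S G \<and> stable H b S \<longrightarrow> subgraph S F)" using reach_props assms by blast
  have st: "stable H b F" unfolding stable_def
  proof (intro conjI)
    show "\<nexists>v. bad_vertex H F v" using assms(3) unfolding del_step_def by blast
    show "\<nexists>v. bad_edge H F v" using assms(3) unfolding del_step_def by blast
    show "\<nexists>v. bad_set H b F v" using assms(3) unfolding del_step_def by blast
    show "\<nexists>v. small_component H b F v" using assms(3) unfolding del_step_def by blast
  qed
  have sgF: "subgraph F G" using P by (simp add: subgraph_def)
  have v: "\<Union>{verts S | S. subgraph S G \<and> stable H b S} = verts F"
    using P sgF st unfolding subgraph_def by blast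
  have e: "\<Union>{edges S | S. subgraph S G \<and> stable H b S} = edges F"
    using P sgF st unfolding subgraph_def by blast
  have "F = (verts F, edges F)" by (simp add: verts_def edges_def)
  then show ?thesis using v e st by (simp add: core_def)
qed

theorem mainTheorem13:
  fixes G :: "'a graph" and H :: "'b graph" and b :: nat
  assumes "wf_graph G" and "wf_graph H" and "connected_graph H" and "0 < b"
  shows "(\<nexists>s. s 0 = G \<and> (\<forall>i. del_step H b (s i) (s (Suc i))))
       \<and> (\<forall>F. (del_step H b)\<^sup>*\<^sup>* G F \<and> (\<nexists>F'. del_step H b F F') \<longrightarrow> F = core H b G)
       \<and> stable H b (core H b G)"
proof (intro conjI)
  show "\<nexists>s. s 0 = G \<and> (\<forall>i. del_step H b (s i) (s (Suc i)))"
  proof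
    assume "\<exists>s. s 0 = G \<and> (\<forall>i. del_step H b (s i) (s (Suc i)))"
    then obtain s where "s 0 = G" "\<forall>i. del_step H b (s i) (s (Suc i))" by blast
    then have "mu (s (Suc (mu G))) + Suc (mu G) \<le> mu G" using chain[of s G H b "Suc (mu G)"] assms(1) by blast
    then show False by simp
  qed
  show "\<forall>F. (del_step H b)\<^sup>*\<^sup>* G F \<and> (\<nexists>F'. del_step H b F F') \<longrightarrow> F = core H b G"
    using terminal_core assms(1) by blast
  obtain F where "(del_step H b)\<^sup>*\<^sup>* G F" "\<nexists>F'. del_step H b F F'"
    using exists_term[OF assms(1)] by blast
  then show "stable H b (core H b G)" using terminal_core assms(1) by metis
qed

end
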